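(* Let $G=(V,E)$ be a connected, locally finite graph with edge weights $w_{xy}\ge w_{min}>0$ for all $xy\in E$ and with $\mu\le\mu_{max}$ on $V$. Suppose $u:(0,\infty)\times V\to(0,\infty)$ is $C^1$ in time and satisfies $$\partial_t(\log u)\ge\Psi_\Upsilon(\log u)-\eta(t)\quad\text{on }(0,\infty)\times V,$$ where $\eta:(0,\infty)\to[0,\infty)$ is continuous. Then for any $0<t_1<t_2$ and $x_1,x_2\in V$, $$u(t_1,x_1)\le u(t_2,x_2)\exp\Big(\int_{t_1}^{t_2}\eta(t)\,dt+\frac{2\mu_{max}\,d(x_1,x_2)^2}{w_{min}(t_2-t_1)}\Big),$$ where $d$ is the combinatorial graph distance.
   Context: Graphs are undirected; $x\sim y$ means $xy\in E$; $w_{xy}=w_{yx}>0$; $\mu:V\to(0,\infty)$. For $H:\mathbb R\to\mathbb R$ and $v:V\to\mathbb R$, $\Psi_H(v)(x)=\frac1{\mu(x)}\sum_{y\sim x}w_{xy}H(v(y)-v(x))$, and $\Upsilon(z)=e^z-1-z$. *)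

theory Defs
  imports "HOL-Analysis.Analysis"
begin

definition Ups :: "real \<Rightarrow> real" where
  "Ups z = exp z - 1 - z"

definition Psi :: "('a \<Rightarrow> 'a \<Rightarrow> bool) \<Rightarrow> ('a \<Rightarrow> 'a \<Rightarrow> real) \<Rightarrow> ('a \<Rightarrow> real)
    \<Rightarrow> (real \<Rightarrow> real) \<Rightarrow> ('a \<Rightarrow> real) \<Rightarrow> 'a \<Rightarrow> real" where
  "Psi E w \<mu> H v x = (1 / \<mu> x) * (\<Sum>y\<in>{y. E x y}. w x y * H (v y - v x))"

definition is_walk :: "('a \<Rightarrow> 'a \<Rightarrow> bool) \<Rightarrow> nat \<Rightarrow> (nat \<Rightarrow> 'a) \<Rightarrow> 'a \<Rightarrow> 'a \<Rightarrow> bool" where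
  "is_walk E n p x y \<longleftrightarrow> p 0 = x \<and> p n = y \<and> (\<forall>i<n. E (p i) (p (Suc i)))"

definition connected_graph :: "('a \<Rightarrow> 'a \<Rightarrow> bool) \<Rightarrow> bool" where
  "connected_graph E \<longleftrightarrow> (\<forall>x y. \<exists>n p. is_walk E n p x y)"

definition locally_finite :: "('a \<Rightarrow> 'a \<Rightarrow> bool) \<Rightarrow> bool" where
  "locally_finite E \<longleftrightarrow> (\<forall>x. finite {y. E x y})"

definition gdist :: "('a \<Rightarrow> 'a \<Rightarrow> bool) \<Rightarrow> 'a \<Rightarrow> 'a \<Rightarrow> nat" where
  "gdist E x y = (LEAST n. \<exists>p. is_walk E n p x y)"

definition C1_on :: "real set \<Rightarrow> (real \<Rightarrow> real) \<Rightarrow> bool" where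
  "C1_on S f \<longleftrightarrow> (\<exists>f'. (\<forall>t\<in>S. (f has_real_derivative f' t) (at t)) \<and> continuous_on S f')"

end

theory Submission
  imports Defs
begin


lemma Ups_nonneg: "Ups z \<ge> 0"
  unfolding Ups_def using exp_ge_add_one_self[of z] by linarith

lemma Ups_sq: "z \<ge> 0 \<Longrightarrow> Ups z \<ge> z^2/2"
  unfolding Ups_def using exp_lower_Taylor_quadratic[of z] by simp

lemma mono_X:
  fixes X F X' eta :: "real \<Rightarrow> real" and a b :: real
  assumes ab: "a \<le> b"
    and cX: "continuous_on {a..b} X" and cF: "continuous_on {a..b} F"
    and F0: "F a = 0"
    and dX: "\<And>t. a<t \<Longrightarrow> t<b \<Longrightarrow> (X has_real_derivative X' t) (at t)"
    and dF: "\<And>t. a<t \<Longrightarrow> t<b \<Longrightarrow> (F has_real_derivative eta t) (at t)"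
    and hX: "\<And>t. a<t \<Longrightarrow> t<b \<Longrightarrow> X' t \<ge> - eta t"
  shows "X a \<le> X b + F b"
proof -
  have "(\<lambda>s. X s + F s) a \<le> (\<lambda>s. X s + F s) b"
  proof (rule DERIV_nonneg_imp_increasing_open[of a b "\<lambda>s. X s + F s", OF ab])
    fix t assume "a < t" "t < b"
    then have "((\<lambda>s. X s + F s) has_real_derivative X' t + eta t) (at t)" "0 \<le> X' t + eta t"
      using DERIV_add[OF dX dF] hX[of t] by auto
    then show "\<exists>y. ((\<lambda>s. X s + F s) has_real_derivative y) (at t) \<and> 0 \<le> y" by blast
  next
    show "continuous_on {a..b} (\<lambda>s. X s + F s)" using cX cF by (intro continuous_intros)
  qed
  then show ?thesis using F0 by simp
qed

lemma edge_step:
  fixes X Y F X' Y' eta :: "real \<Rightarrow> real" and a b c :: real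
  assumes ab: "a < b" and c: "c > 0"
    and cX: "continuous_on {a..b} X" and cY: "continuous_on {a..b} Y"
    and cF: "continuous_on {a..b} F"
    and F0: "F a = 0"
    and dX: "\<And>t. a<t \<Longrightarrow> t<b \<Longrightarrow> (X has_real_derivative X' t) (at t)"
    and dY: "\<And>t. a<t \<Longrightarrow> t<b \<Longrightarrow> (Y has_real_derivative Y' t) (at t)"
    and dF: "\<And>t. a<t \<Longrightarrow> t<b \<Longrightarrow> (F has_real_derivative eta t) (at t)"
    and hX: "\<And>t. a<t \<Longrightarrow> t<b \<Longrightarrow> X' t \<ge> - eta t"
    and hY: "\<And>t. a<t \<Longrightarrow> t<b \<Longrightarrow> Y' t \<ge> c * Ups (X t - Y t) - eta t"
  shows "X a \<le> Y b + F b + 2 / (c * (b - a))"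
proof -
  have H: "X a \<le> X t + F t" if t: "t \<in> {a..b}" for t
  proof (rule mono_X[of a t X F X' eta])
    show "continuous_on {a..t} X" using t by (intro continuous_on_subset[OF cX]) auto
    show "continuous_on {a..t} F" using t by (intro continuous_on_subset[OF cF]) auto
    show "a \<le> t" "F a = 0" using t F0 by auto
  next
    fix s assume s: "a < s" "s < t"
    then have s': "a < s" "s < b" using t by auto
    show "(X has_real_derivative X' s) (at s)" by (rule dX[OF s'])
    show "(F has_real_derivative eta s) (at s)" by (rule dF[OF s'])
    show "- eta s \<le> X' s" by (rule hX[OF s'])
  qed
  define G where "G t = X a - Y t - F t" for t
  have dG: "(G has_real_derivative (- Y' t - eta t)) (at t)" if "a<t" "t<b" for t
    unfolding G_def using dY[OF that] dF[OF that]
    by (auto intro!: derivative_eq_intros)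
  have cG: "continuous_on {a..b} G" unfolding G_def using cY cF by (intro continuous_intros)
  have Gmono: "G b \<le> G t" if t: "t \<in> {a..b}" for t
  proof (rule DERIV_nonpos_imp_decreasing_open[of t b G])
    show "t \<le> b" using t by auto
    show "continuous_on {t..b} G" using t by (intro continuous_on_subset[OF cG]) auto
    fix s assume s: "t < s" "s < b"
    then have s': "a < s" "s < b" using t by auto
    have "- Y' s - eta s \<le> 0" using hY[OF s'] Ups_nonneg[of "X s - Y s"] c
      by (smt (verit) mult_nonneg_nonneg)
    then show "\<exists>y. (G has_real_derivative y) (at s) \<and> y \<le> 0" using dG[OF s'] by blast
  qed
  have pos2: "2 / (c * (b - a)) > 0" using c ab by simp
  show ?thesis
  proof (cases "G b \<le> 0")
    case True then show ?thesis using pos2 unfolding G_def by linarith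
  next
    case False
    then have Gpos: "G t > 0" if "t \<in> {a..b}" for t using Gmono[OF that] by simp
    define K where "K t = inverse (G t) - c * t / 2" for t
    have "K a \<le> K b"
    proof (rule DERIV_nonneg_imp_increasing_open[of a b K])
      show "a \<le> b" using ab by simp
      show "continuous_on {a..b} K" unfolding K_def using cG Gpos
        by (intro continuous_intros) (auto, metis less_irrefl)
      fix t assume t: "a < t" "t < b"
      have Gt: "G t > 0" using Gpos t by auto
      have le: "G t \<le> X t - Y t" using H[of t] t unfolding G_def by auto
      have "c * (G t)^2 / 2 \<le> c * ((X t - Y t)^2 / 2)"
        using le Gt c by (auto intro!: mult_left_mono power_mono)
      also have "\<dots> \<le> c * Ups (X t - Y t)"
        using Ups_sq[of "X t - Y t"] le Gt c by (auto intro!: mult_left_mono)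
      also have "\<dots> \<le> Y' t + eta t" using hY[OF t] by simp
      finally have key: "c * (G t)^2 / 2 \<le> Y' t + eta t" .
      have dK: "(K has_real_derivative (- ((- Y' t - eta t) * inverse (G t ^ Suc (Suc 0)))) - c / 2) (at t)"
        unfolding K_def
        by (rule DERIV_diff[OF DERIV_inverse_fun[OF dG[OF t]]]) (use Gt in \<open>auto intro!: derivative_eq_intros\<close>)
      have "(Y' t + eta t) / (G t)^2 \<ge> c / 2"
        using key Gt by (simp add: field_simps)
      then have "- ((- Y' t - eta t) * inverse (G t ^ Suc (Suc 0))) - c / 2 \<ge> 0"
      proof -
        have e1: "G t ^ Suc (Suc 0) = (G t)^2" by (simp add: numeral_2_eq_2)
        have e2: "- ((- Y' t - eta t) * inverse ((G t)^2)) = (Y' t + eta t) / (G t)^2"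
          by (simp add: divide_inverse algebra_simps)
        show ?thesis unfolding e1 e2 using \<open>(Y' t + eta t) / (G t)^2 \<ge> c / 2\<close> by linarith
      qed
      then show "\<exists>y. (K has_real_derivative y) (at t) \<and> 0 \<le> y" using dK by blast
    qed
    then have "inverse (G a) + c * (b - a) / 2 \<le> inverse (G b)"
    proof -
      have "c * (b - a) / 2 = c * b / 2 - c * a / 2" by (simp add: algebra_simps diff_divide_distrib)
      then show ?thesis using \<open>K a \<le> K b\<close> unfolding K_def by linarith
    qed
    moreover have "inverse (G a) > 0" using Gpos[of a] ab by auto
    ultimately have "c * (b - a) / 2 < inverse (G b)" by linarith
    then have "G b < 2 / (c * (b - a))"
      using Gpos[of b] ab c by (simp add: field_simps)
    then show ?thesis unfolding G_def by simp
  qed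
qed


lemma arith_split:
  fixes m T A B :: real
  assumes T: "T > 0" and m: "m \<ge> 0" and A: "A > 0"
  shows "B * m^2 / (A * (T * m / (m + 1))) + B / (A * (T / (m + 1))) = B * (m + 1)^2 / (A * T)"
proof (cases "m = 0")
  case True then show ?thesis by simp
next
  case False
  then have "m > 0" using m by simp
  then show ?thesis using T A by (simp add: field_simps power2_eq_square)
qed

theorem theorem6p1:
  fixes E :: "'a \<Rightarrow> 'a \<Rightarrow> bool" and w :: "'a \<Rightarrow> 'a \<Rightarrow> real" and \<mu> :: "'a \<Rightarrow> real"
    and u :: "real \<Rightarrow> 'a \<Rightarrow> real" and \<eta> :: "real \<Rightarrow> real"
    and wmin \<mu>max t1 t2 :: real and x1 x2 :: 'a
  assumes sym: "\<And>x y. E x y \<Longrightarrow> E y x"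
    and conn: "connected_graph E"
    and lf: "locally_finite E"
    and wsym: "\<And>x y. E x y \<Longrightarrow> w x y = w y x"
    and wmin_pos: "wmin > 0"
    and wmin: "\<And>x y. E x y \<Longrightarrow> w x y \<ge> wmin"
    and mu_pos: "\<And>x. \<mu> x > 0"
    and mu_max: "\<And>x. \<mu> x \<le> \<mu>max"
    and u_pos: "\<And>t x. t > 0 \<Longrightarrow> u t x > 0"
    and u_C1: "\<And>x. C1_on {0<..} (\<lambda>t. u t x)"
    and eta_nonneg: "\<And>t. t > 0 \<Longrightarrow> \<eta> t \<ge> 0"
    and eta_cont: "continuous_on {0<..} \<eta>"
    and ineq: "\<And>t x. t > 0 \<Longrightarrow>
       deriv (\<lambda>s. ln (u s x)) t \<ge> Psi E w \<mu> Ups (\<lambda>y. ln (u t y)) x - \<eta> t"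
    and t1: "0 < t1" and t12: "t1 < t2"
  shows "u t1 x1 \<le> u t2 x2 * exp (integral {t1..t2} \<eta>
           + 2 * \<mu>max * (real (gdist E x1 x2))^2 / (wmin * (t2 - t1)))"
proof -
  define v where "v t x = ln (u t x)" for t x
  have mupos: "\<mu>max > 0" using mu_pos[of x1] mu_max[of x1] by linarith
  define c where "c = wmin / \<mu>max"
  have cpos: "c > 0" unfolding c_def using mupos wmin_pos by simp
  have "\<forall>x. \<exists>f'. \<forall>t\<in>{0<..}. ((\<lambda>t. u t x) has_real_derivative f' t) (at t)"
    using u_C1 unfolding C1_on_def by blast
  then obtain U' where U'0: "\<forall>x. \<forall>t\<in>{0<..}. ((\<lambda>t. u t x) has_real_derivative U' x t) (at t)"
    by metis
  have U': "((\<lambda>t. u t x) has_real_derivative U' x t) (at t)" if "t > 0" for x t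
    using U'0 that by auto
  define V' where "V' x t = U' x t / u t x" for x t
  have dV: "((\<lambda>s. v s x) has_real_derivative V' x t) (at t)" if t: "t > 0" for x t
  proof -
    have "((\<lambda>s. ln (u s x)) has_real_derivative (1 / u t x) * U' x t) (at t)"
      by (rule DERIV_chain2[OF DERIV_ln_divide[OF u_pos[OF t]] U'[OF t]])
    then show ?thesis unfolding v_def V'_def by simp
  qed
  have hV: "V' x t \<ge> Psi E w \<mu> Ups (\<lambda>y. v t y) x - \<eta> t" if t: "t > 0" for x t
    using ineq[OF t, of x] DERIV_imp_deriv[OF dV[OF t, of x]] unfolding v_def by simp
  have Psi_nn: "Psi E w \<mu> Ups f x \<ge> 0" for f x
    unfolding Psi_def using mu_pos[of x] wmin wmin_pos Ups_nonneg
    by (intro mult_nonneg_nonneg sum_nonneg) (auto intro: order_trans[OF less_imp_le[OF wmin_pos]])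
  have Psi_edge: "Psi E w \<mu> Ups f x \<ge> c * Ups (f y - f x)" if xy: "E x y" for f x y
  proof -
    have fin: "finite {y. E x y}" using lf unfolding locally_finite_def by blast
    have wpos: "w x z \<ge> 0" if "E x z" for z using wmin[OF that] wmin_pos by linarith
    have "w x y * Ups (f y - f x) \<le> (\<Sum>z\<in>{y. E x y}. w x z * Ups (f z - f x))"
      using xy by (intro member_le_sum[OF _ _ fin]) (auto intro: mult_nonneg_nonneg wpos Ups_nonneg)
    then have "(1 / \<mu> x) * (w x y * Ups (f y - f x)) \<le> Psi E w \<mu> Ups f x"
      unfolding Psi_def using mu_pos[of x] by (intro mult_left_mono) auto
    moreover have "c \<le> (1 / \<mu> x) * w x y"
    proof -
      have "wmin / \<mu>max \<le> w x y / \<mu> x"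
        using wmin[OF xy] mu_max[of x] mu_pos[of x] wmin_pos
        by (intro frac_le) auto
      then show ?thesis unfolding c_def by simp
    qed
    ultimately show ?thesis using Ups_nonneg[of "f y - f x"]
      by (smt (verit) mult.assoc mult_right_mono)
  qed
  have cont_v: "continuous_on {a..b} (\<lambda>s. v s x)" if "0 < a" for a b x
    using that by (intro continuous_at_imp_continuous_on) (auto intro!: DERIV_isCont[OF dV])
  have cont_eta: "continuous_on {a..b} \<eta>" if "0 < a" for a b
    using that by (intro continuous_on_subset[OF eta_cont]) auto
  have dF: "((\<lambda>r. integral {a..r} \<eta>) has_real_derivative \<eta> t) (at t)" if "0 < a" "a < t" "t < b" for a b t
    using integral_has_real_derivative[OF cont_eta[OF that(1), of b], of t] that
    by (simp add: at_within_Icc_at)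
  have cF: "continuous_on {a..b} (\<lambda>r. integral {a..r} \<eta>)" if "0 < a" for a b
    unfolding continuous_on_eq_continuous_within
    using integral_has_real_derivative[OF cont_eta[OF that, of b]] DERIV_continuous by blast
  have F0: "integral {a..a} \<eta> = 0" for a by simp
  have stay: "v s x \<le> v t x + integral {s..t} \<eta>" if st: "0 < s" "s \<le> t" for s t x
  proof (rule mono_X[of s t "\<lambda>r. v r x" "\<lambda>r. integral {s..r} \<eta>" "V' x" \<eta>])
    show "s \<le> t" using st by simp
    show "continuous_on {s..t} (\<lambda>r. v r x)" "continuous_on {s..t} (\<lambda>r. integral {s..r} \<eta>)"
      using st cont_v cF by auto
    show "integral {s..s} \<eta> = 0" by simp
  next
    fix r assume r: "s < r" "r < t"
    then have r0: "r > 0" using st by auto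
    show "((\<lambda>r. v r x) has_real_derivative V' x r) (at r)" by (rule dV[OF r0])
    show "((\<lambda>r. integral {s..r} \<eta>) has_real_derivative \<eta> r) (at r)" by (rule dF[OF st(1) r])
    show "- \<eta> r \<le> V' x r" using hV[OF r0, of x] Psi_nn[of "\<lambda>y. v r y" x] by linarith
  qed
  have edge: "v s x \<le> v t y + integral {s..t} \<eta> + 2 * \<mu>max / (wmin * (t - s))"
    if xy: "E x y" and st: "0 < s" "s < t" for x y s t
  proof -
    have "v s x \<le> v t y + integral {s..t} \<eta> + 2 / (c * (t - s))"
    proof (rule edge_step[of s t c "\<lambda>r. v r x" "\<lambda>r. v r y" "\<lambda>r. integral {s..r} \<eta>" "V' x" "V' y" \<eta>])
      show "s < t" "0 < c" using st cpos by auto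
      show "continuous_on {s..t} (\<lambda>r. v r x)" "continuous_on {s..t} (\<lambda>r. v r y)"
        "continuous_on {s..t} (\<lambda>r. integral {s..r} \<eta>)" using st cont_v cF by auto
      show "integral {s..s} \<eta> = 0" by simp
    next
      fix r assume r: "s < r" "r < t"
      then have r0: "r > 0" using st by auto
      show "((\<lambda>r. v r x) has_real_derivative V' x r) (at r)" by (rule dV[OF r0])
      show "((\<lambda>r. v r y) has_real_derivative V' y r) (at r)" by (rule dV[OF r0])
      show "((\<lambda>r. integral {s..r} \<eta>) has_real_derivative \<eta> r) (at r)" by (rule dF[OF st(1) r])
      show "- \<eta> r \<le> V' x r" using hV[OF r0, of x] Psi_nn[of "\<lambda>y. v r y" x] by linarith
      show "c * Ups (v r x - v r y) - \<eta> r \<le> V' y r"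
        using hV[OF r0, of y] Psi_edge[OF sym[OF xy], of "\<lambda>y. v r y"] by linarith
    qed
    moreover have "2 / (c * (t - s)) = 2 * \<mu>max / (wmin * (t - s))"
      unfolding c_def using mupos wmin_pos by (simp add: field_simps)
    ultimately show ?thesis by simp
  qed
  have path: "\<And>p y ta tb. is_walk E n p x1 y \<Longrightarrow> 0 < ta \<Longrightarrow> ta \<le> tb \<Longrightarrow> (0 < n \<Longrightarrow> ta < tb) \<Longrightarrow>
      v ta x1 \<le> v tb y + integral {ta..tb} \<eta> + 2 * \<mu>max * (real n)^2 / (wmin * (tb - ta))" for n
  proof (induction n)
    case 0
    then have "y = x1" unfolding is_walk_def by auto
    then show ?case using stay[OF 0(2,3), of x1] by simp
  next
    case (Suc n p y ta tb)
    have walk: "is_walk E n p x1 (p n)" and e: "E (p n) y" using Suc.prems(1) unfolding is_walk_def by auto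
    have tab: "ta < tb" using Suc.prems by auto
    define s where "s = ta + (tb - ta) * real n / (real n + 1)"
    have frac: "real n / (real n + 1) < 1" "0 \<le> real n / (real n + 1)" by auto
    have "(tb - ta) * (real n / (real n + 1)) < (tb - ta) * 1"
      using tab frac by (intro mult_strict_left_mono) auto
    then have s_lt: "s < tb" unfolding s_def by simp
    have s_ge: "ta \<le> s" unfolding s_def using tab by simp
    have s_gt: "ta < s" if "0 < n" unfolding s_def using tab that by simp
    have IH: "v ta x1 \<le> v s (p n) + integral {ta..s} \<eta> + 2 * \<mu>max * (real n)^2 / (wmin * (s - ta))"
      using Suc.IH[OF walk Suc.prems(2) s_ge s_gt] .
    have ed: "v s (p n) \<le> v tb y + integral {s..tb} \<eta> + 2 * \<mu>max / (wmin * (tb - s))"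
      using edge[OF e _ s_lt] Suc.prems(2) s_ge by linarith
    have comb: "integral {ta..s} \<eta> + integral {s..tb} \<eta> = integral {ta..tb} \<eta>"
      using Henstock_Kurzweil_Integration.integral_combine[OF s_ge less_imp_le[OF s_lt] integrable_continuous_interval[OF cont_eta[OF Suc.prems(2), of tb]]] .
    have ar: "2 * \<mu>max * (real n)^2 / (wmin * (s - ta)) + 2 * \<mu>max / (wmin * (tb - s))
        = 2 * \<mu>max * (real (Suc n))^2 / (wmin * (tb - ta))"
    proof -
      have "s - ta = (tb - ta) * real n / (real n + 1)" unfolding s_def by simp
      moreover have "tb - s = (tb - ta) / (real n + 1)"
        unfolding s_def by (simp add: field_simps)
      ultimately show ?thesis
        using arith_split[of "tb - ta" "real n" wmin "2 * \<mu>max"] tab wmin_pos by simp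
    qed
    show ?case using IH ed comb ar by linarith
  qed
  obtain n0 p0 where "is_walk E n0 p0 x1 x2" using conn unfolding connected_graph_def by blast
  then have "\<exists>p. is_walk E (gdist E x1 x2) p x1 x2"
    unfolding gdist_def by (intro LeastI_ex[where P="\<lambda>n. \<exists>p. is_walk E n p x1 x2"]) blast
  then obtain p where pw: "is_walk E (gdist E x1 x2) p x1 x2" by blast
  have main: "ln (u t1 x1) \<le> ln (u t2 x2) + (integral {t1..t2} \<eta>
           + 2 * \<mu>max * (real (gdist E x1 x2))^2 / (wmin * (t2 - t1)))"
    using path[OF pw t1 less_imp_le[OF t12] ] t12 unfolding v_def by simp
  have "u t1 x1 = exp (ln (u t1 x1))" using u_pos[OF t1] by simp
  also have "\<dots> \<le> exp (ln (u t2 x2) + (integral {t1..t2} \<eta>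
           + 2 * \<mu>max * (real (gdist E x1 x2))^2 / (wmin * (t2 - t1))))"
    using main by simp
  also have "\<dots> = u t2 x2 * exp (integral {t1..t2} \<eta>
           + 2 * \<mu>max * (real (gdist E x1 x2))^2 / (wmin * (t2 - t1)))"
    using u_pos[of t2 x2] t1 t12 by (simp add: exp_add)
  finally show ?thesis .
qed

end
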